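(* Let $G$ be an extraspecial $p$-group of order $p^{2n+1}$ ($p$ prime, $n\ge1$). Then $$A_G(t)=\frac{1}{p^{2n+1}}\left(\frac{p}{1-p^{2n+1}t}+\frac{p^{2n+1}-p}{1-p^{2n}t}\right).$$
   Context: A finite $p$-group $G$ is extraspecial if $Z(G)=G'$ has order $p$ and $G/Z(G)$ is elementary abelian. For a finite group $G$ and $n\ge0$, let $\alpha_{G,n}$ be the number of orbits of $G$ acting on $G^n$ by simultaneous conjugation, and $A_G(t)=\sum_{n\ge0}\alpha_{G,n}t^n$. *)

theory Defs
  imports "HOL-Algebra.Algebra" "HOL-Computational_Algebra.Formal_Power_Series"
begin

definition group_center :: "('a, 'b) monoid_scheme \<Rightarrow> 'a set" where
  "group_center G = {z \<in> carrier G. \<forall>x \<in> carrier G. z \<otimes>\<^bsub>G\<^esub> x = x \<otimes>\<^bsub>G\<^esub> z}"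

definition elementary_abelian :: "('a, 'b) monoid_scheme \<Rightarrow> nat \<Rightarrow> bool" where
  "elementary_abelian H p \<longleftrightarrow> comm_group H \<and> finite (carrier H) \<and>
     (\<forall>x \<in> carrier H. x [^]\<^bsub>H\<^esub> p = \<one>\<^bsub>H\<^esub>)"

definition extraspecial :: "('a, 'b) monoid_scheme \<Rightarrow> nat \<Rightarrow> bool" where
  "extraspecial G p \<longleftrightarrow> group G \<and> finite (carrier G) \<and>
     (\<exists>k. card (carrier G) = p ^ k) \<and>
     group_center G = derived G (carrier G) \<and>
     card (group_center G) = p \<and>
     elementary_abelian (G Mod group_center G) p"

definition sim_conj :: "('a, 'b) monoid_scheme \<Rightarrow> 'a \<Rightarrow> 'a list \<Rightarrow> 'a list" where
  "sim_conj G g xs = map (\<lambda>x. g \<otimes>\<^bsub>G\<^esub> x \<otimes>\<^bsub>G\<^esub> inv\<^bsub>G\<^esub> g) xs"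

definition tuples :: "('a, 'b) monoid_scheme \<Rightarrow> nat \<Rightarrow> 'a list set" where
  "tuples G m = {xs. length xs = m \<and> set xs \<subseteq> carrier G}"

definition alpha :: "('a, 'b) monoid_scheme \<Rightarrow> nat \<Rightarrow> nat" where
  "alpha G m = card (orbits G (tuples G m) (sim_conj G))"

definition A_series :: "('a, 'b) monoid_scheme \<Rightarrow> real fps" where
  "A_series G = Abs_fps (\<lambda>m. real (alpha G m))"

end

theory Submission
  imports Defs
begin

lemma inv_geom:
  fixes c :: real
  shows "inverse (1 - fps_const c * fps_X) = Abs_fps (\<lambda>m. c ^ m)"
proof (rule fps_inverse_unique)
  show "(1 - fps_const c * fps_X) * Abs_fps (\<lambda>m. c ^ m) = 1"
  proof (rule fps_ext)
    fix k
    show "fps_nth ((1 - fps_const c * fps_X) * Abs_fps (\<lambda>m. c ^ m)) k = fps_nth 1 k"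
      by (cases k) (simp_all add: ring_distribs mult.assoc fps_mult_left_const_nth)
  qed
qed

lemma series_eq:
  fixes G :: "('a, 'b) monoid_scheme" and p n :: nat
  assumes p: "p > 0"
    and coef: "\<And>m. real (alpha G m) * real p ^ (2*n+1) = real p * (real p ^ (2*n+1)) ^ m + (real p ^ (2*n+1) - real p) * (real p ^ (2*n)) ^ m"
  shows "A_series G =
    fps_const (1 / real p ^ (2 * n + 1)) *
      (fps_const (real p) * inverse (1 - fps_const (real p ^ (2 * n + 1)) * fps_X)
       + fps_const (real p ^ (2 * n + 1) - real p) * inverse (1 - fps_const (real p ^ (2 * n)) * fps_X))"
proof (rule fps_ext)
  fix m
  have pos: "real p ^ (2*n+1) > 0" using p by simp
  have "fps_nth (fps_const (1 / real p ^ (2 * n + 1)) *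
      (fps_const (real p) * inverse (1 - fps_const (real p ^ (2 * n + 1)) * fps_X)
       + fps_const (real p ^ (2 * n + 1) - real p) * inverse (1 - fps_const (real p ^ (2 * n)) * fps_X))) m
     = (real p * (real p ^ (2*n+1)) ^ m + (real p ^ (2*n+1) - real p) * (real p ^ (2*n)) ^ m) / real p ^ (2*n+1)"
    unfolding inv_geom by (simp add: fps_mult_left_const_nth)
  also have "... = real (alpha G m)" using pos
    by (subst coef[of m, symmetric]) (rule nonzero_mult_div_cancel_right, use p in simp)
  finally have eq: "fps_nth (fps_const (1 / real p ^ (2 * n + 1)) *
      (fps_const (real p) * inverse (1 - fps_const (real p ^ (2 * n + 1)) * fps_X)
       + fps_const (real p ^ (2 * n + 1) - real p) * inverse (1 - fps_const (real p ^ (2 * n)) * fps_X))) m = real (alpha G m)" .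
  show "fps_nth (A_series G) m = fps_nth (fps_const (1 / real p ^ (2 * n + 1)) *
      (fps_const (real p) * inverse (1 - fps_const (real p ^ (2 * n + 1)) * fps_X)
       + fps_const (real p ^ (2 * n + 1) - real p) * inverse (1 - fps_const (real p ^ (2 * n)) * fps_X))) m"
    unfolding A_series_def fps_nth_Abs_fps using eq by (rule sym)
qed

context group begin

lemma tuples_mem: "xs \<in> tuples G m \<longleftrightarrow> length xs = m \<and> set xs \<subseteq> carrier G"
  by (simp add: tuples_def)

lemma sim_conj_closed:
  "g \<in> carrier G \<Longrightarrow> xs \<in> tuples G m \<Longrightarrow> sim_conj G g xs \<in> tuples G m"
  by (auto simp: tuples_def sim_conj_def)

lemma sim_conj_comp:
  assumes "g \<in> carrier G" "h \<in> carrier G" "set xs \<subseteq> carrier G"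
  shows "sim_conj G g (sim_conj G h xs) = sim_conj G (g \<otimes> h) xs"
  unfolding sim_conj_def using assms
  by (auto simp: inv_mult_group m_assoc subsetD)

lemma sim_conj_one:
  assumes "set xs \<subseteq> carrier G"
  shows "sim_conj G \<one> xs = xs"
  unfolding sim_conj_def using assms by (induct xs) auto

lemma sim_conj_action:
  "group_action G (tuples G m) (\<lambda>g. restrict (sim_conj G g) (tuples G m))"
proof -
  let ?E = "tuples G m"
  let ?psi = "\<lambda>g. restrict (sim_conj G g) ?E"
  have Bij: "?psi g \<in> Bij ?E" if g: "g \<in> carrier G" for g
  proof -
    have "bij_betw (?psi g) ?E ?E"
    proof (rule bij_betwI[where g = "?psi (inv g)"])
      show "?psi g \<in> ?E \<rightarrow> ?E" using g sim_conj_closed by auto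
      show "?psi (inv g) \<in> ?E \<rightarrow> ?E" using g sim_conj_closed by auto
      show "?psi (inv g) (?psi g x) = x" if "x \<in> ?E" for x
        using that g sim_conj_closed[OF g that] sim_conj_comp[of "inv g" g x] sim_conj_one[of x]
        by (simp add: tuples_mem)
      show "?psi g (?psi (inv g) x) = x" if "x \<in> ?E" for x
        using that g sim_conj_closed[of "inv g", OF _ that] sim_conj_comp[of g "inv g" x] sim_conj_one[of x]
        by (simp add: tuples_mem)
    qed
    then show ?thesis by (simp add: Bij_def)
  qed
  have hom: "?psi \<in> hom G (BijGroup ?E)"
  proof (rule homI)
    show "?psi x \<in> carrier (BijGroup ?E)" if "x \<in> carrier G" for x
      using Bij[OF that] by (simp add: BijGroup_def)
    show "?psi (x \<otimes> y) = ?psi x \<otimes>\<^bsub>BijGroup ?E\<^esub> ?psi y"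
      if "x \<in> carrier G" "y \<in> carrier G" for x y
      using that Bij[OF that(1)] Bij[OF that(2)] sim_conj_closed[OF that(2)]
      by (auto simp: BijGroup_def compose_def sim_conj_comp tuples_mem intro!: ext)
  qed
  show ?thesis
    unfolding group_action_def group_hom_def group_hom_axioms_def
    using hom is_group group_BijGroup by auto
qed

definition centr :: "'a \<Rightarrow> 'a set" where
  "centr g = {x \<in> carrier G. g \<otimes> x \<otimes> inv g = x}"

lemma orbits_sim_conj:
  "orbits G (tuples G m) (sim_conj G) = orbits G (tuples G m) (\<lambda>g. restrict (sim_conj G g) (tuples G m))"
  unfolding orbits_def orbit_def by auto

lemma map_self_iff: "map f xs = xs \<longleftrightarrow> (\<forall>x\<in>set xs. f x = x)"
  by (induct xs) auto

lemma invariants_sim_conj: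
  assumes g: "g \<in> carrier G"
  shows "invariants (tuples G m) (\<lambda>g. restrict (sim_conj G g) (tuples G m)) g
     = {xs. set xs \<subseteq> centr g \<and> length xs = m}"
  unfolding invariants_def centr_def tuples_def sim_conj_def
  by (auto simp: map_self_iff)

lemma burnside_sim_conj:
  assumes fin: "finite (carrier G)"
  shows "alpha G m * order G = (\<Sum>g\<in>carrier G. card (centr g) ^ m)"
proof -
  interpret A: group_action G "tuples G m" "\<lambda>g. restrict (sim_conj G g) (tuples G m)"
    by (rule sim_conj_action)
  have finE: "finite (tuples G m)"
    unfolding tuples_def using finite_lists_length_eq[OF fin, of m] by (simp add: conj_commute)
  have fc: "finite (centr g)" for g using fin by (simp add: centr_def)
  have "alpha G m * order G = (\<Sum>g\<in>carrier G. card (invariants (tuples G m) (\<lambda>g. restrict (sim_conj G g) (tuples G m)) g))"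
    unfolding alpha_def orbits_sim_conj using A.burnside[OF fin finE] .
  also have "\<dots> = (\<Sum>g\<in>carrier G. card (centr g) ^ m)"
    by (rule sum.cong) (simp_all add: invariants_sim_conj card_lists_length_eq fc)
  finally show ?thesis .
qed

end

context group begin

lemma conj_fix_iff:
  assumes "a \<in> carrier G" "b \<in> carrier G"
  shows "a \<otimes> b \<otimes> inv a = b \<longleftrightarrow> a \<otimes> b = b \<otimes> a"
proof
  assume h: "a \<otimes> b \<otimes> inv a = b"
  have "a \<otimes> b = a \<otimes> b \<otimes> inv a \<otimes> a" using assms by (simp add: m_assoc)
  also have "\<dots> = b \<otimes> a" using h by simp
  finally show "a \<otimes> b = b \<otimes> a" .
next
  assume h: "a \<otimes> b = b \<otimes> a"
  then show "a \<otimes> b \<otimes> inv a = b" using assms by (simp add: m_assoc)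
qed

lemma centr_stab:
  assumes g: "g \<in> carrier G"
  shows "centr g = stabilizer G (\<lambda>g. (\<lambda>h \<in> carrier G. g \<otimes> h \<otimes> (inv g))) g"
  unfolding centr_def stabilizer_def using g conj_fix_iff by auto

lemma centr_card:
  assumes fin: "finite (carrier G)" and p: "Factorial_Ring.prime p"
    and ord: "order G = p ^ k"
    and Zd: "group_center G = derived G (carrier G)"
    and Zc: "card (group_center G) = p"
  shows "g \<in> group_center G \<Longrightarrow> card (centr g) = p ^ k"
    and "g \<in> carrier G - group_center G \<Longrightarrow> card (centr g) * p = p ^ k"
proof -
  assume g: "g \<in> group_center G"
  then have "centr g = carrier G"
    unfolding centr_def group_center_def using conj_fix_iff by auto
  then show "card (centr g) = p ^ k" using ord by (simp add: order_def)
next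
  assume g: "g \<in> carrier G - group_center G"
  interpret C: group_action G "carrier G" "\<lambda>g. (\<lambda>h \<in> carrier G. g \<otimes> h \<otimes> (inv g))"
    by (rule action_by_conjugation)
  let ?O = "orbit G (\<lambda>g. (\<lambda>h \<in> carrier G. g \<otimes> h \<otimes> (inv g))) g"
  have gc: "g \<in> carrier G" using g by auto
  have os: "card ?O * card (centr g) = p ^ k"
    using C.orbit_stabilizer_theorem[OF gc] centr_stab[OF gc] ord by simp
  have sub: "?O \<subseteq> (\<lambda>z. g \<otimes> z) ` group_center G"
  proof
    fix y assume "y \<in> ?O"
    then obtain h where h: "h \<in> carrier G" and y: "y = h \<otimes> g \<otimes> inv h"
      unfolding orbit_def using gc by auto
    have "inv g \<otimes> h \<otimes> inv (inv g) \<otimes> inv h \<in> derived_set G (carrier G)"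
      using h gc by blast
    then have "inv g \<otimes> h \<otimes> g \<otimes> inv h \<in> group_center G"
      unfolding Zd derived_def using gc by (auto intro: generate.incl)
    moreover have "y = g \<otimes> (inv g \<otimes> h \<otimes> g \<otimes> inv h)"
      using y h gc by (simp add: m_assoc[symmetric])
    ultimately show "y \<in> (\<lambda>z. g \<otimes> z) ` group_center G" by blast
  qed
  have finZ: "finite (group_center G)" using fin unfolding group_center_def by simp
  have le: "card ?O \<le> p"
    using card_mono[OF finite_imageI[OF finZ] sub] card_image_le[OF finZ, of "\<lambda>z. g \<otimes> z"] Zc
    by simp
  have finO: "finite ?O" using sub finZ finite_subset by blast
  obtain x where x: "x \<in> carrier G" "g \<otimes> x \<noteq> x \<otimes> g"
    using g unfolding group_center_def by auto
  have "g \<in> ?O" unfolding orbit_def using gc by (auto intro!: exI[of _ \<one>])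
  moreover have "x \<otimes> g \<otimes> inv x \<in> ?O" unfolding orbit_def using gc x by auto
  moreover have "x \<otimes> g \<otimes> inv x \<noteq> g" using conj_fix_iff[OF x(1) gc] x by auto
  ultimately have s2: "{g, x \<otimes> g \<otimes> inv x} \<subseteq> ?O" and c2: "card {g, x \<otimes> g \<otimes> inv x} = 2"
    by auto
  have ge2: "card ?O \<ge> 2" using card_mono[OF finO s2] c2 by linarith
  have "card ?O dvd p ^ k" using os dvd_triv_left[of "card ?O" "card (centr g)"] by simp
  then obtain i where i: "i \<le> k" "card ?O = p ^ i"
    using divides_primepow_nat[OF p] by auto
  have "i \<noteq> 0" proof assume "i = 0" with i ge2 show False by simp qed
  moreover have "i \<le> 1"
  proof (rule ccontr)
    assume "\<not> i \<le> 1"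
    then have "p ^ 2 \<le> p ^ i" using prime_gt_1_nat[OF p] \<open>\<not> i \<le> 1\<close> by (intro power_increasing) auto
    moreover have "p < p ^ 2" using prime_gt_1_nat[OF p] by (simp add: power2_eq_square)
    ultimately show False using le i by simp
  qed
  ultimately have "card ?O = p" using i by (cases i) auto
  then show "card (centr g) * p = p ^ k" using os by (simp add: mult.commute)
qed

end

theorem lemma7p7:
  fixes G :: "('a, 'b) monoid_scheme" and p n :: nat
  assumes "Factorial_Ring.prime p" and "n \<ge> 1"
    and "extraspecial G p"
    and "card (carrier G) = p ^ (2 * n + 1)"
  shows "A_series G =
    fps_const (1 / real p ^ (2 * n + 1)) *
      (fps_const (real p) * inverse (1 - fps_const (real p ^ (2 * n + 1)) * fps_X)
       + fps_const (real p ^ (2 * n + 1) - real p) * inverse (1 - fps_const (real p ^ (2 * n)) * fps_X))"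
proof -
  have grp: "group G" and fin: "finite (carrier G)"
    and Zd: "group_center G = derived G (carrier G)" and Zc: "card (group_center G) = p"
    using assms(3) unfolding extraspecial_def by auto
  interpret group G by (rule grp)
  have p: "Factorial_Ring.prime p" by (rule assms(1))
  have p0: "p > 0" using prime_gt_0_nat[OF p] .
  have ord: "order G = p ^ (2 * n + 1)" using assms(4) by (simp add: order_def)
  have Zsub: "group_center G \<subseteq> carrier G" unfolding group_center_def by auto
  have cZ: "\<And>g. g \<in> group_center G \<Longrightarrow> card (centr g) = p ^ (2 * n + 1)"
    using centr_card(1)[OF fin p ord Zd Zc] .
  have cN: "\<And>g. g \<in> carrier G - group_center G \<Longrightarrow> card (centr g) = p ^ (2 * n)"
  proof -
    fix g assume "g \<in> carrier G - group_center G"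
    then have "card (centr g) * p = p ^ (2 * n) * p"
      using centr_card(2)[OF fin p ord Zd Zc] by (simp add: mult.commute)
    then show "card (centr g) = p ^ (2 * n)" using p0 by simp
  qed
  have cdiff: "card (carrier G - group_center G) = p ^ (2 * n + 1) - p"
    using card_Diff_subset[OF finite_subset[OF Zsub fin] Zsub] assms(4) Zc by simp
  have ple: "p \<le> p ^ (2 * n + 1)"
    using p0 by (simp add: self_le_power)
  have coef: "real (alpha G m) * real p ^ (2*n+1) = real p * (real p ^ (2*n+1)) ^ m + (real p ^ (2*n+1) - real p) * (real p ^ (2*n)) ^ m" for m
  proof -
    have "alpha G m * p ^ (2*n+1) = (\<Sum>g\<in>carrier G. card (centr g) ^ m)"
      using burnside_sim_conj[OF fin, of m] ord by simp
    also have "\<dots> = (\<Sum>g\<in>carrier G - group_center G. card (centr g) ^ m) + (\<Sum>g\<in>group_center G. card (centr g) ^ m)"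
      by (rule sum.subset_diff[OF Zsub fin])
    also have "\<dots> = (\<Sum>g\<in>carrier G - group_center G. (p ^ (2*n)) ^ m) + (\<Sum>g\<in>group_center G. (p ^ (2*n+1)) ^ m)"
      using cZ cN by simp
    also have "\<dots> = (p ^ (2*n+1) - p) * (p ^ (2*n)) ^ m + p * (p ^ (2*n+1)) ^ m"
      using cdiff Zc by simp
    finally have "real (alpha G m * p ^ (2*n+1)) = real ((p ^ (2*n+1) - p) * (p ^ (2*n)) ^ m + p * (p ^ (2*n+1)) ^ m)"
      by (simp only:)
    then show ?thesis using ple by (simp add: of_nat_diff)
  qed
  show ?thesis by (rule series_eq[OF p0 coef])
qed

end
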